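(* In the setting of the set-expansion estimator (fix $A\in[0,1]^{|\mathcal F|\times M}$, $\boldsymbol\beta\in[0,1]^{|\mathcal F|}$, $D=\mathrm{diag}(1,\dots,M)$, $C>0$, with $\mathcal F_0=\{\mathbf w: A\mathbf w=\boldsymbol\beta,\ \mathbf 0\le\mathbf w\le C\mathbf 1\}\ne\emptyset$; $\theta_{\min},\theta_{\max}$ the min and max of $\mathbf 1^\top AD(\mathbf w+\mathbf 1)$ over $\mathcal F_0$; random estimators $\hat A_n,\hat{\boldsymbol\beta}_n$ with entrywise maximal errors $O_p(n^{-1/2})$; $\hat m_n=\min_{\mathbf 0\le\mathbf w\le C\mathbf 1}\|\hat A_n\mathbf w-\hat{\boldsymbol\beta}_n\|_\infty$; and $\hat\theta_{n,\min}$, $\hat\theta_{n,\max}$ the min and max of $\mathbf 1^\top\hat A_nD(\mathbf w+\mathbf 1)$ over $\{\mathbf w:\|\hat A_n\mathbf w-\hat{\boldsymbol\beta}_n\|_\infty\le\hat m_n+\kappa_n/\sqrt n,\ \mathbf 0\le\mathbf w\le C\mathbf 1\}$), suppose moreover that $A$ has full column rank and that the deterministic sequence $\kappa_n>0$ is bounded (e.g. constant). Then \[\hat\theta_{n,\min}-\theta_{\min}=O_p\Big(\frac1{\sqrt n}\Big),\qquad\hat\theta_{n,\max}-\theta_{\max}=O_p\Big(\frac1{\sqrt n}\Big).\]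
   Context: In the application $A=A_x=[\mathbb{P}(R=1,F=f,Y=y\mid X=x)]_{f,y}$, $\boldsymbol\beta=\boldsymbol\beta_x=(\mathbb{P}(R=0,F=f\mid X=x))_f$ for a fixed stratum $x$, and $n$ is the stratum sample size; full column rank of $A_x$ corresponds to point identification of $\mathbb{E}[Y\mid X=x]$. $\|\cdot\|_\infty$ is the max-absolute-entry norm. *)

theory Defs
  imports "HOL-Probability.Probability"
begin

text \<open>Matrices are represented as functions nat => nat => real with rows i < nF
  (indexing the set of values of F) and columns j < nM (0-based; column j
  corresponds to outcome value j+1, so D = diag(1,...,M) has entry j+1).\<close>

definition mulv :: "nat \<Rightarrow> (nat \<Rightarrow> nat \<Rightarrow> real) \<Rightarrow> (nat \<Rightarrow> real) \<Rightarrow> nat \<Rightarrow> real" where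
  "mulv nM A w i = (\<Sum>j<nM. A i j * w j)"

definition supnorm :: "nat \<Rightarrow> (nat \<Rightarrow> real) \<Rightarrow> real" where
  "supnorm nF v = (MAX i\<in>{..<nF}. \<bar>v i\<bar>)"

definition matnorm :: "nat \<Rightarrow> nat \<Rightarrow> (nat \<Rightarrow> nat \<Rightarrow> real) \<Rightarrow> real" where
  "matnorm nF nM B = (MAX p\<in>{..<nF} \<times> {..<nM}. \<bar>B (fst p) (snd p)\<bar>)"

definition box :: "nat \<Rightarrow> real \<Rightarrow> (nat \<Rightarrow> real) set" where
  "box nM C = {w. \<forall>j<nM. 0 \<le> w j \<and> w j \<le> C}"

definition feas :: "nat \<Rightarrow> nat \<Rightarrow> real \<Rightarrow> (nat \<Rightarrow> nat \<Rightarrow> real) \<Rightarrow> (nat \<Rightarrow> real) \<Rightarrow> (nat \<Rightarrow> real) set" where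
  "feas nF nM C A \<beta> = {w \<in> box nM C. \<forall>i<nF. mulv nM A w i = \<beta> i}"

definition obj :: "nat \<Rightarrow> nat \<Rightarrow> (nat \<Rightarrow> nat \<Rightarrow> real) \<Rightarrow> (nat \<Rightarrow> real) \<Rightarrow> real" where
  "obj nF nM A w = (\<Sum>i<nF. \<Sum>j<nM. A i j * real (Suc j) * (w j + 1))"

definition theta_min where
  "theta_min nF nM C A \<beta> = (INF w\<in>feas nF nM C A \<beta>. obj nF nM A w)"
definition theta_max where
  "theta_max nF nM C A \<beta> = (SUP w\<in>feas nF nM C A \<beta>. obj nF nM A w)"

definition mhat where
  "mhat nF nM C A \<beta> = (INF w\<in>box nM C. supnorm nF (\<lambda>i. mulv nM A w i - \<beta> i))"

definition relax where
  "relax nF nM C A \<beta> t =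
     {w \<in> box nM C. supnorm nF (\<lambda>i. mulv nM A w i - \<beta> i) \<le> mhat nF nM C A \<beta> + t}"

definition thetahat_min where
  "thetahat_min nF nM C A \<beta> t = (INF w\<in>relax nF nM C A \<beta> t. obj nF nM A w)"
definition thetahat_max where
  "thetahat_max nF nM C A \<beta> t = (SUP w\<in>relax nF nM C A \<beta> t. obj nF nM A w)"

definition full_col_rank :: "nat \<Rightarrow> nat \<Rightarrow> (nat \<Rightarrow> nat \<Rightarrow> real) \<Rightarrow> bool" where
  "full_col_rank nF nM A \<longleftrightarrow>
     (\<forall>w. (\<forall>i<nF. mulv nM A w i = 0) \<longrightarrow> (\<forall>j<nM. w j = 0))"

text \<open>X n = O_p(r n): for every eps > 0 there are K, N such that for n >= N,
  |X n| <= K r n outside an event of probability at most eps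
  (outer-probability formulation; no measurability of X required).\<close>
definition bigOp :: "'a measure \<Rightarrow> (nat \<Rightarrow> 'a \<Rightarrow> real) \<Rightarrow> (nat \<Rightarrow> real) \<Rightarrow> bool" where
  "bigOp M X r \<longleftrightarrow>
     (\<forall>\<epsilon>>0. \<exists>K N. \<forall>n\<ge>N. \<exists>E\<in>sets M. measure M E \<ge> 1 - \<epsilon> \<and>
        (\<forall>\<omega>\<in>E \<inter> space M. \<bar>X n \<omega>\<bar> \<le> K * r n))"

end

theory Submission imports Defs "Jordan_Normal_Form.Determinant" begin

lemma Mm_entry:
  fixes A :: "nat \<Rightarrow> nat \<Rightarrow> real" and nF nM :: nat
  defines "Am \<equiv> mat nF nM (\<lambda>(i,j). A i j)"
  assumes "k < nM" "l < nM"
  shows "(transpose_mat Am * Am) $$ (k,l) = (\<Sum>i<nF. A i k * A i l)"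
  using assms by (simp add: Am_def scalar_prod_def atLeast0LessThan)

lemma Mm_vec:
  fixes A :: "nat \<Rightarrow> nat \<Rightarrow> real" and nF nM :: nat
  defines "Am \<equiv> mat nF nM (\<lambda>(i,j). A i j)"
  assumes "k < nM"
  shows "Matrix.vec_index ((transpose_mat Am * Am) *\<^sub>v Matrix.vec nM w) k = (\<Sum>i<nF. A i k * mulv nM A w i)"
proof -
  have "Matrix.vec_index ((transpose_mat Am * Am) *\<^sub>v Matrix.vec nM w) k = (\<Sum>l<nM. (\<Sum>i<nF. A i k * A i l) * w l)"
    using assms Mm_entry[of k nM l nF A] by (simp add: Am_def scalar_prod_def atLeast0LessThan)
  also have "\<dots> = (\<Sum>i<nF. A i k * mulv nM A w i)"
    by (simp add: mulv_def sum_distrib_left sum_distrib_right mult.assoc sum.swap[of _ "{..<nM}"])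
  finally show ?thesis .
qed


lemma left_inv:
  fixes A :: "nat \<Rightarrow> nat \<Rightarrow> real" and nF nM :: nat
  assumes fr: "full_col_rank nF nM A"
  shows "\<exists>N :: nat \<Rightarrow> nat \<Rightarrow> real. \<forall>w. \<forall>j<nM.
           w j = (\<Sum>k<nM. N j k * (\<Sum>i<nF. A i k * mulv nM A w i))"
proof -
  define Am where "Am = mat nF nM (\<lambda>(i,j). A i j)"
  define Mm where "Mm = transpose_mat Am * Am"
  have Mc: "Mm \<in> carrier_mat nM nM" unfolding Mm_def Am_def
    by (rule mult_carrier_mat[of _ nM nF]) (simp_all only: transpose_carrier_mat mat_carrier)
  have "det Mm \<noteq> 0"
  proof
    assume "det Mm = 0"
    then obtain v where v: "v \<in> carrier_vec nM" "v \<noteq> 0\<^sub>v nM" "Mm *\<^sub>v v = 0\<^sub>v nM"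
      using det_0_iff_vec_prod_zero[OF Mc] by blast
    define w where "w = (\<lambda>l. Matrix.vec_index v l)"
    have vw: "v = Matrix.vec nM w" using v(1) by (auto simp: w_def)
    have z: "(\<Sum>i<nF. A i k * mulv nM A w i) = 0" if "k < nM" for k
      using Mm_vec[OF that, of nF A w] v(3) that unfolding Mm_def Am_def vw by simp
    have e1: "(mulv nM A w i)^2 = mulv nM A w i * (\<Sum>k<nM. A i k * w k)" for i
      by (simp add: power2_eq_square mulv_def)
    have "(\<Sum>i<nF. (mulv nM A w i)^2) = (\<Sum>i<nF. \<Sum>k<nM. mulv nM A w i * (A i k * w k))"
      by (simp add: e1 sum_distrib_left)
    also have "\<dots> = (\<Sum>k<nM. \<Sum>i<nF. mulv nM A w i * (A i k * w k))"
      by (rule sum.swap)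
    also have "\<dots> = (\<Sum>k<nM. w k * (\<Sum>i<nF. A i k * mulv nM A w i))"
      by (simp add: sum_distrib_left mult_ac)
    also have "\<dots> = 0" using z by simp
    finally have "(\<Sum>i<nF. (mulv nM A w i)^2) = 0" .
    then have "\<forall>i<nF. mulv nM A w i = 0"
      by (simp add: sum_nonneg_eq_0_iff)
    then have "\<forall>j<nM. w j = 0" using fr unfolding full_col_rank_def by blast
    then have "v = 0\<^sub>v nM" using vw by auto
    with v(2) show False by simp
  qed
  from det_non_zero_imp_unit[OF Mc this, of "()"]
  obtain Nm where Nm: "Nm \<in> carrier_mat nM nM" "Nm * Mm = 1\<^sub>m nM"
    unfolding Units_def ring_mat_def by auto
  show ?thesis
  proof (intro exI allI impI)
    fix w :: "nat \<Rightarrow> real" and j assume j: "j < nM"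
    have "Nm *\<^sub>v (Mm *\<^sub>v Matrix.vec nM w) = (Nm * Mm) *\<^sub>v Matrix.vec nM w"
      by (rule assoc_mult_mat_vec[symmetric, of _ nM nM _ nM]) (use Nm Mc in auto)
    also have "\<dots> = Matrix.vec nM w" using Nm by simp
    finally have e: "Nm *\<^sub>v (Mm *\<^sub>v Matrix.vec nM w) = Matrix.vec nM w" .
    have "w j = Matrix.vec_index (Nm *\<^sub>v (Mm *\<^sub>v Matrix.vec nM w)) j" using e j by simp
    also have "\<dots> = (\<Sum>k<nM. Nm $$ (j,k) * (\<Sum>i<nF. A i k * mulv nM A w i))"
    proof -
      have "Matrix.vec_index (Nm *\<^sub>v (Mm *\<^sub>v Matrix.vec nM w)) j
          = (\<Sum>k\<in>{0..<nM}. Nm $$ (j,k) * Matrix.vec_index (Mm *\<^sub>v Matrix.vec nM w) k)"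
        using j Nm Mc by (simp add: scalar_prod_def)
      also have "\<dots> = (\<Sum>k<nM. Nm $$ (j,k) * (\<Sum>i<nF. A i k * mulv nM A w i))"
        unfolding atLeast0LessThan
        by (intro sum.cong refl) (simp only: Mm_def Am_def Mm_vec lessThan_iff)
      finally show ?thesis .
    qed
    finally show "w j = (\<Sum>k<nM. (\<lambda>j k. Nm $$ (j,k)) j k * (\<Sum>i<nF. A i k * mulv nM A w i))" by simp
  qed
qed

lemma inv_bound:
  fixes A :: "nat \<Rightarrow> nat \<Rightarrow> real" and nF nM :: nat
  assumes fr: "full_col_rank nF nM A"
  shows "\<exists>L\<ge>0. \<forall>w c. c \<ge> 0 \<longrightarrow> (\<forall>i<nF. \<bar>mulv nM A w i\<bar> \<le> c) \<longrightarrow> (\<forall>j<nM. \<bar>w j\<bar> \<le> L * c)"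
proof -
  obtain N where N: "\<forall>w. \<forall>j<nM. w j = (\<Sum>k<nM. N j k * (\<Sum>i<nF. A i k * mulv nM A w i))"
    using left_inv[OF fr] by blast
  define L where "L = (\<Sum>j<nM. \<Sum>k<nM. \<bar>N j k\<bar> * (\<Sum>i<nF. \<bar>A i k\<bar>))"
  have L0: "L \<ge> 0" unfolding L_def by (intro sum_nonneg mult_nonneg_nonneg) auto
  show ?thesis
  proof (intro exI[of _ L] conjI allI impI L0)
    fix w :: "nat \<Rightarrow> real" and c :: real and j
    assume c: "c \<ge> 0" and m: "\<forall>i<nF. \<bar>mulv nM A w i\<bar> \<le> c" and j: "j < nM"
    have "\<bar>w j\<bar> = \<bar>\<Sum>k<nM. N j k * (\<Sum>i<nF. A i k * mulv nM A w i)\<bar>" using N j by metis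
    also have "\<dots> \<le> (\<Sum>k<nM. \<bar>N j k * (\<Sum>i<nF. A i k * mulv nM A w i)\<bar>)" by (rule sum_abs)
    also have "\<dots> \<le> (\<Sum>k<nM. \<bar>N j k\<bar> * (\<Sum>i<nF. \<bar>A i k\<bar>) * c)"
    proof (rule sum_mono)
      fix k assume k: "k \<in> {..<nM}"
      have "\<bar>\<Sum>i<nF. A i k * mulv nM A w i\<bar> \<le> (\<Sum>i<nF. \<bar>A i k * mulv nM A w i\<bar>)" by (rule sum_abs)
      also have "\<dots> \<le> (\<Sum>i<nF. \<bar>A i k\<bar> * c)"
        by (rule sum_mono) (use m in \<open>auto simp: abs_mult intro: mult_left_mono\<close>)
      finally have "\<bar>\<Sum>i<nF. A i k * mulv nM A w i\<bar> \<le> (\<Sum>i<nF. \<bar>A i k\<bar>) * c"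
        by (simp add: sum_distrib_right)
      then show "\<bar>N j k * (\<Sum>i<nF. A i k * mulv nM A w i)\<bar> \<le> \<bar>N j k\<bar> * (\<Sum>i<nF. \<bar>A i k\<bar>) * c"
        by (simp add: abs_mult mult.assoc mult_left_mono)
    qed
    also have "\<dots> = (\<Sum>k<nM. \<bar>N j k\<bar> * (\<Sum>i<nF. \<bar>A i k\<bar>)) * c"
      by (simp add: sum_distrib_right)
    also have "\<dots> \<le> L * c"
      unfolding L_def
      by (rule mult_right_mono[OF member_le_sum[where f="\<lambda>j. \<Sum>k<nM. \<bar>N j k\<bar> * (\<Sum>i<nF. \<bar>A i k\<bar>)"]])
         (use j c in \<open>auto intro!: sum_nonneg\<close>)
    finally show "\<bar>w j\<bar> \<le> L * c" .
  qed
qed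

lemma mulv_diff:
  assumes "\<forall>j<nM. \<bar>Ah i j - A i j\<bar> \<le> a" "w \<in> box nM C"
  shows "\<bar>mulv nM Ah w i - mulv nM A w i\<bar> \<le> real nM * C * a"
proof -
  have "\<bar>mulv nM Ah w i - mulv nM A w i\<bar> = \<bar>\<Sum>j<nM. (Ah i j - A i j) * w j\<bar>"
    by (simp add: mulv_def sum_subtractf left_diff_distrib)
  also have "\<dots> \<le> (\<Sum>j<nM. \<bar>(Ah i j - A i j) * w j\<bar>)" by (rule sum_abs)
  also have "\<dots> \<le> (\<Sum>j<nM. a * C)"
    by (rule sum_mono) (use assms in \<open>auto simp: box_def abs_mult intro!: mult_mono\<close>)
  finally show ?thesis by (simp add: mult_ac)
qed

lemma supnorm_le:
  assumes "nF \<ge> 1"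
  shows "supnorm nF v \<le> c \<longleftrightarrow> (\<forall>i<nF. \<bar>v i\<bar> \<le> c)"
proof -
  have "0 \<in> {..<nF}" using assms by simp
  then have "{..<nF} \<noteq> {}" by blast
  then show ?thesis unfolding supnorm_def by (subst Max_le_iff) auto
qed

lemma supnorm_ge:
  assumes "i < nF"
  shows "\<bar>v i\<bar> \<le> supnorm nF v"
  using assms unfolding supnorm_def by (intro Max_ge) auto

lemma matnorm_ge:
  assumes "i < nF" "j < nM"
  shows "\<bar>B i j\<bar> \<le> matnorm nF nM B"
  using assms unfolding matnorm_def by (intro Max_ge) force+

lemma inf_sup_close:
  fixes f :: "'b \<Rightarrow> real"
  assumes "S \<noteq> {}" "\<forall>x\<in>S. \<bar>f x - c\<bar> \<le> D"
  shows "\<bar>(INF x\<in>S. f x) - c\<bar> \<le> D \<and> \<bar>(SUP x\<in>S. f x) - c\<bar> \<le> D"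
proof -
  have bb: "bdd_below (f ` S)" "bdd_above (f ` S)"
    using assms(2) by (auto intro!: bdd_belowI2[where m="c - D"] bdd_aboveI2[where M="c + D"] simp: abs_le_iff)
  obtain x0 where x0: "x0 \<in> S" using assms(1) by blast
  have "(INF x\<in>S. f x) \<ge> c - D" using assms by (intro cINF_greatest) (auto simp: abs_le_iff)
  moreover have "(INF x\<in>S. f x) \<le> c + D"
    using cINF_lower[OF bb(1) x0] assms(2) x0 by (auto simp: abs_le_iff)
  moreover have "(SUP x\<in>S. f x) \<le> c + D" using assms by (intro cSUP_least) (auto simp: abs_le_iff)
  moreover have "(SUP x\<in>S. f x) \<ge> c - D"
    using cSUP_upper[OF x0 bb(2)] assms(2) x0 by (auto simp: abs_le_iff)
  ultimately show ?thesis by (simp add: abs_le_iff)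
qed

lemma abs_prod3:
  fixes x s y p q r :: real
  assumes "\<bar>x\<bar> \<le> p" "0 \<le> s" "s \<le> q" "\<bar>y\<bar> \<le> r"
  shows "\<bar>x * s * y\<bar> \<le> p * q * r"
proof -
  have "\<bar>x * s * y\<bar> = \<bar>x\<bar> * s * \<bar>y\<bar>" using assms(2) by (simp add: abs_mult)
  also have "\<dots> \<le> p * q * \<bar>y\<bar>"
    by (intro mult_right_mono mult_mono) (use assms in auto)
  also have "\<dots> \<le> p * q * r"
    by (intro mult_left_mono) (use assms in \<open>auto intro: order_trans[OF abs_ge_zero]\<close>)
  finally show ?thesis .
qed

lemma mulv_sub: "mulv nM A (\<lambda>j. w j - w0 j) i = mulv nM A w i - mulv nM A w0 i"
  by (simp add: mulv_def sum_subtractf right_diff_distrib)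

lemma det_main:
  fixes A Ah :: "nat \<Rightarrow> nat \<Rightarrow> real" and \<beta> bh w0 :: "nat \<Rightarrow> real"
  assumes nF: "nF \<ge> 1" and nM: "nM \<ge> 1"
    and Aent: "\<forall>i<nF. \<forall>j<nM. 0 \<le> A i j \<and> A i j \<le> 1"
    and C: "C > 0" and w0: "w0 \<in> feas nF nM C A \<beta>"
    and L: "L \<ge> 0"
    and Lp: "\<forall>w c. c \<ge> 0 \<longrightarrow> (\<forall>i<nF. \<bar>mulv nM A w i\<bar> \<le> c) \<longrightarrow> (\<forall>j<nM. \<bar>w j\<bar> \<le> L * c)"
    and a: "\<forall>i<nF. \<forall>j<nM. \<bar>Ah i j - A i j\<bar> \<le> a"
    and b: "\<forall>i<nF. \<bar>bh i - \<beta> i\<bar> \<le> b"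
    and t: "t > 0"
  shows "relax nF nM C Ah bh t \<noteq> {} \<and>
    (\<forall>w\<in>relax nF nM C Ah bh t. \<bar>obj nF nM Ah w - obj nF nM A w0\<bar>
        \<le> real nF * real nM * real nM * ((C + 1) * a + L * (2 * real nM * C * a + 2 * b + t)))"
proof -
  have w0b: "w0 \<in> box nM C" and w0e: "\<forall>i<nF. mulv nM A w0 i = \<beta> i"
    using w0 by (auto simp: feas_def)
  have "\<bar>Ah 0 0 - A 0 0\<bar> \<le> a" using a nF nM by auto
  then have a0: "a \<ge> 0" by (rule order_trans[OF abs_ge_zero])
  have "\<bar>bh 0 - \<beta> 0\<bar> \<le> b" using b nF by auto
  then have b0: "b \<ge> 0" by (rule order_trans[OF abs_ge_zero])
  define g where "g = (\<lambda>w. supnorm nF (\<lambda>i. mulv nM Ah w i - bh i))"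
  have g0: "g w \<ge> 0" for w
  proof -
    have "\<bar>mulv nM Ah w 0 - bh 0\<bar> \<le> g w" using supnorm_ge[of 0 nF] nF unfolding g_def by auto
    then show ?thesis by (rule order_trans[OF abs_ge_zero])
  qed
  have m0: "g w0 \<le> real nM * C * a + b"
    unfolding g_def supnorm_le[OF nF]
  proof (intro allI impI)
    fix i assume i: "i < nF"
    have "\<bar>mulv nM Ah w0 i - mulv nM A w0 i\<bar> \<le> real nM * C * a"
      using mulv_diff[of nM Ah i A a w0 C] a i w0b by auto
    moreover have "\<bar>bh i - \<beta> i\<bar> \<le> b" using b i by auto
    ultimately show "\<bar>mulv nM Ah w0 i - bh i\<bar> \<le> real nM * C * a + b"
      using w0e[rule_format, OF i] by (smt (verit))
  qed
  have bdd: "bdd_below (g ` box nM C)" using g0 by (intro bdd_belowI2[where m=0]) auto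
  have mhg: "mhat nF nM C Ah bh = (INF w\<in>box nM C. g w)" unfolding mhat_def g_def by simp
  have mh: "mhat nF nM C Ah bh \<le> real nM * C * a + b"
    using cINF_lower[OF bdd w0b] m0 mhg by linarith
  have relax_eq: "relax nF nM C Ah bh t = {w \<in> box nM C. g w \<le> mhat nF nM C Ah bh + t}"
    unfolding relax_def g_def by simp
  have "(INF w\<in>box nM C. g w) < mhat nF nM C Ah bh + t" using t mhg by simp
  then obtain w1 where "w1 \<in> box nM C" "g w1 < mhat nF nM C Ah bh + t"
    using cINF_less_iff[OF _ bdd] w0b by blast
  then have ne: "relax nF nM C Ah bh t \<noteq> {}" unfolding relax_eq by force
  have bnd: "\<bar>obj nF nM Ah w - obj nF nM A w0\<bar>
        \<le> real nF * real nM * real nM * ((C + 1) * a + L * (2 * real nM * C * a + 2 * b + t))"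
    if w: "w \<in> relax nF nM C Ah bh t" for w
  proof -
    define c where "c = 2 * real nM * C * a + 2 * b + t"
    have wb: "w \<in> box nM C" and gw: "g w \<le> mhat nF nM C Ah bh + t" using w unfolding relax_eq by auto
    have c0: "c \<ge> 0" unfolding c_def using a0 b0 t C by simp
    have rw: "\<forall>i<nF. \<bar>mulv nM Ah w i - bh i\<bar> \<le> mhat nF nM C Ah bh + t"
      using gw unfolding g_def supnorm_le[OF nF] .
    have "\<forall>i<nF. \<bar>mulv nM A (\<lambda>j. w j - w0 j) i\<bar> \<le> c"
    proof (intro allI impI)
      fix i assume i: "i < nF"
      have "\<bar>mulv nM Ah w i - mulv nM A w i\<bar> \<le> real nM * C * a"
        using mulv_diff[of nM Ah i A a w C] a i wb by auto
      moreover have "\<bar>bh i - \<beta> i\<bar> \<le> b" using b i by auto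
      moreover have "\<bar>mulv nM Ah w i - bh i\<bar> \<le> real nM * C * a + b + t" using rw i mh by (smt (verit))
      ultimately show "\<bar>mulv nM A (\<lambda>j. w j - w0 j) i\<bar> \<le> c"
        unfolding mulv_sub c_def using w0e[rule_format, OF i]
          mult.assoc[of 2 "real nM * C" a] mult.assoc[of 2 "real nM" C] by (smt (verit))
    qed
    then have dw: "\<forall>j<nM. \<bar>w j - w0 j\<bar> \<le> L * c" using Lp c0 by blast
    have eq: "obj nF nM Ah w - obj nF nM A w0 = (\<Sum>i<nF. \<Sum>j<nM.
        (Ah i j - A i j) * real (Suc j) * (w j + 1) + A i j * real (Suc j) * (w j - w0 j))"
      unfolding obj_def sum_subtractf[symmetric] by (intro sum.cong refl) (simp add: algebra_simps)
    have "\<bar>obj nF nM Ah w - obj nF nM A w0\<bar> = \<bar>(\<Sum>i<nF. \<Sum>j<nM.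
        (Ah i j - A i j) * real (Suc j) * (w j + 1) + A i j * real (Suc j) * (w j - w0 j))\<bar>"
      by (simp only: eq)
    also have "\<dots> \<le> (\<Sum>i<nF. \<Sum>j<nM. \<bar>(Ah i j - A i j) * real (Suc j) * (w j + 1) + A i j * real (Suc j) * (w j - w0 j)\<bar>)"
      by (rule order_trans[OF sum_abs]) (intro sum_mono sum_abs)
    also have "\<dots> \<le> (\<Sum>i<nF. \<Sum>j<nM. a * real nM * (C + 1) + 1 * real nM * (L * c))"
    proof (intro sum_mono)
      fix i j assume i: "i \<in> {..<nF}" and j: "j \<in> {..<nM}"
      have sj: "real (Suc j) \<le> real nM" using j by simp
      have wj: "0 \<le> w j" "w j \<le> C" using wb j by (auto simp: box_def)
      have aij: "\<bar>Ah i j - A i j\<bar> \<le> a" using a i j by auto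
      have Aij: "\<bar>A i j\<bar> \<le> 1" using Aent i j by auto
      have dwj: "\<bar>w j - w0 j\<bar> \<le> L * c" using dw j by auto
      have w1: "\<bar>w j + 1\<bar> \<le> C + 1" using wj by simp
      have "\<bar>(Ah i j - A i j) * real (Suc j) * (w j + 1)\<bar> \<le> a * real nM * (C + 1)"
        by (rule abs_prod3[OF aij _ sj w1]) simp
      moreover have "\<bar>A i j * real (Suc j) * (w j - w0 j)\<bar> \<le> 1 * real nM * (L * c)"
        by (rule abs_prod3[OF Aij _ sj dwj]) simp
      ultimately show "\<bar>(Ah i j - A i j) * real (Suc j) * (w j + 1) + A i j * real (Suc j) * (w j - w0 j)\<bar>
          \<le> a * real nM * (C + 1) + 1 * real nM * (L * c)" by (smt (verit))
    qed
    also have "\<dots> = real nF * real nM * real nM * ((C + 1) * a + L * c)"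
      by (simp add: algebra_simps)
    finally show ?thesis unfolding c_def .
  qed
  show ?thesis using ne bnd by blast
qed

lemma det_final:
  fixes A Ah :: "nat \<Rightarrow> nat \<Rightarrow> real" and \<beta> bh w0 :: "nat \<Rightarrow> real"
  assumes nF: "nF \<ge> 1" and nM: "nM \<ge> 1"
    and Aent: "\<forall>i<nF. \<forall>j<nM. 0 \<le> A i j \<and> A i j \<le> 1"
    and C: "C > 0" and w0: "w0 \<in> feas nF nM C A \<beta>"
    and L: "L \<ge> 0"
    and Lp: "\<forall>w c. c \<ge> 0 \<longrightarrow> (\<forall>i<nF. \<bar>mulv nM A w i\<bar> \<le> c) \<longrightarrow> (\<forall>j<nM. \<bar>w j\<bar> \<le> L * c)"
    and a: "\<forall>i<nF. \<forall>j<nM. \<bar>Ah i j - A i j\<bar> \<le> a"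
    and b: "\<forall>i<nF. \<bar>bh i - \<beta> i\<bar> \<le> b"
    and t: "t > 0"
  shows "\<bar>thetahat_min nF nM C Ah bh t - theta_min nF nM C A \<beta>\<bar>
        \<le> real nF * real nM * real nM * ((C + 1) * a + L * (2 * real nM * C * a + 2 * b + t))
    \<and> \<bar>thetahat_max nF nM C Ah bh t - theta_max nF nM C A \<beta>\<bar>
        \<le> real nF * real nM * real nM * ((C + 1) * a + L * (2 * real nM * C * a + 2 * b + t))"
proof -
  let ?D = "real nF * real nM * real nM * ((C + 1) * a + L * (2 * real nM * C * a + 2 * b + t))"
  have dm: "relax nF nM C Ah bh t \<noteq> {}"
    "\<forall>w\<in>relax nF nM C Ah bh t. \<bar>obj nF nM Ah w - obj nF nM A w0\<bar> \<le> ?D"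
    using det_main[OF assms] by auto
  have h: "\<bar>thetahat_min nF nM C Ah bh t - obj nF nM A w0\<bar> \<le> ?D
     \<and> \<bar>thetahat_max nF nM C Ah bh t - obj nF nM A w0\<bar> \<le> ?D"
    unfolding thetahat_min_def thetahat_max_def by (rule inf_sup_close[OF dm])
  have w0e: "\<forall>i<nF. mulv nM A w0 i = \<beta> i" using w0 by (auto simp: feas_def)
  have feq: "\<forall>w\<in>feas nF nM C A \<beta>. \<bar>obj nF nM A w - obj nF nM A w0\<bar> \<le> 0"
  proof
    fix w assume w: "w \<in> feas nF nM C A \<beta>"
    have "\<forall>i<nF. \<bar>mulv nM A (\<lambda>j. w j - w0 j) i\<bar> \<le> 0"
      using w w0e by (auto simp: feas_def mulv_sub)
    then have "\<forall>j<nM. \<bar>w j - w0 j\<bar> \<le> L * 0" using Lp by blast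
    then have "\<forall>j<nM. w j = w0 j" by auto
    then have "obj nF nM A w = obj nF nM A w0" unfolding obj_def
      by (intro sum.cong refl) auto
    then show "\<bar>obj nF nM A w - obj nF nM A w0\<bar> \<le> 0" by simp
  qed
  have fne: "feas nF nM C A \<beta> \<noteq> {}" using w0 by blast
  have th: "theta_min nF nM C A \<beta> = obj nF nM A w0" "theta_max nF nM C A \<beta> = obj nF nM A w0"
    using inf_sup_close[OF fne feq] unfolding theta_min_def theta_max_def by auto
  show ?thesis using h th by simp
qed

lemma bigOp_comb:
  fixes X Y Z :: "nat \<Rightarrow> 'a \<Rightarrow> real"
  assumes M: "prob_space M" and X: "bigOp M X r" and Y: "bigOp M Y r"
    and r: "\<forall>n. r n \<ge> 0" and p: "p \<ge> 0" and q: "q \<ge> 0" and s: "s \<ge> 0"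
    and Z: "\<forall>n\<ge>1. \<forall>\<omega>. \<bar>Z n \<omega>\<bar> \<le> p * \<bar>X n \<omega>\<bar> + q * \<bar>Y n \<omega>\<bar> + s * r n"
  shows "bigOp M Z r"
  unfolding bigOp_def
proof (intro allI impI)
  fix \<epsilon> :: real assume e: "\<epsilon> > 0"
  obtain K1 N1 where K1: "\<forall>n\<ge>N1. \<exists>E\<in>sets M. measure M E \<ge> 1 - \<epsilon>/2 \<and>
        (\<forall>\<omega>\<in>E \<inter> space M. \<bar>X n \<omega>\<bar> \<le> K1 * r n)"
    using X e unfolding bigOp_def by (meson half_gt_zero)
  obtain K2 N2 where K2: "\<forall>n\<ge>N2. \<exists>E\<in>sets M. measure M E \<ge> 1 - \<epsilon>/2 \<and>
        (\<forall>\<omega>\<in>E \<inter> space M. \<bar>Y n \<omega>\<bar> \<le> K2 * r n)"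
    using Y e unfolding bigOp_def by (meson half_gt_zero)
  show "\<exists>K N. \<forall>n\<ge>N. \<exists>E\<in>sets M. 1 - \<epsilon> \<le> measure M E \<and>
        (\<forall>\<omega>\<in>E \<inter> space M. \<bar>Z n \<omega>\<bar> \<le> K * r n)"
  proof (intro exI allI impI)
    fix n assume n: "max (max N1 N2) 1 \<le> n"
    obtain E1 where E1: "E1 \<in> sets M" "measure M E1 \<ge> 1 - \<epsilon>/2"
      "\<forall>\<omega>\<in>E1 \<inter> space M. \<bar>X n \<omega>\<bar> \<le> K1 * r n" using K1 n by auto
    obtain E2 where E2: "E2 \<in> sets M" "measure M E2 \<ge> 1 - \<epsilon>/2"
      "\<forall>\<omega>\<in>E2 \<inter> space M. \<bar>Y n \<omega>\<bar> \<le> K2 * r n" using K2 n by auto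
    have EI: "E1 \<inter> E2 \<in> sets M" using E1 E2 by auto
    have "measure M (space M - (E1 \<inter> E2)) = measure M ((space M - E1) \<union> (space M - E2))"
      by (metis Diff_Int)
    also have "\<dots> \<le> measure M (space M - E1) + measure M (space M - E2)"
      using E1 E2 by (intro measure_Un_le) auto
    also have "\<dots> = (1 - measure M E1) + (1 - measure M E2)"
      using E1 E2 prob_space.prob_compl[OF M] by simp
    finally have "measure M (space M - (E1 \<inter> E2)) \<le> \<epsilon>" using E1 E2 by linarith
    then have m: "1 - \<epsilon> \<le> measure M (E1 \<inter> E2)"
      using prob_space.prob_compl[OF M EI] by linarith
    have "\<forall>\<omega>\<in>(E1 \<inter> E2) \<inter> space M. \<bar>Z n \<omega>\<bar> \<le> (p * \<bar>K1\<bar> + q * \<bar>K2\<bar> + s) * r n"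
    proof
      fix \<omega> assume w: "\<omega> \<in> (E1 \<inter> E2) \<inter> space M"
      have x: "\<bar>X n \<omega>\<bar> \<le> \<bar>K1\<bar> * r n"
        using E1(3) w r by (meson IntD1 IntD2 IntI abs_ge_self mult_right_mono order_trans)
      have y: "\<bar>Y n \<omega>\<bar> \<le> \<bar>K2\<bar> * r n"
        using E2(3) w r by (meson IntD1 IntD2 IntI abs_ge_self mult_right_mono order_trans)
      have "\<bar>Z n \<omega>\<bar> \<le> p * \<bar>X n \<omega>\<bar> + q * \<bar>Y n \<omega>\<bar> + s * r n" using Z n by auto
      also have "\<dots> \<le> p * (\<bar>K1\<bar> * r n) + q * (\<bar>K2\<bar> * r n) + s * r n"
        using x y p q s by (intro add_mono mult_left_mono) auto
      also have "\<dots> = (p * \<bar>K1\<bar> + q * \<bar>K2\<bar> + s) * r n" by (simp add: algebra_simps)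
      finally show "\<bar>Z n \<omega>\<bar> \<le> (p * \<bar>K1\<bar> + q * \<bar>K2\<bar> + s) * r n" .
    qed
    then show "\<exists>E\<in>sets M. 1 - \<epsilon> \<le> measure M E \<and>
        (\<forall>\<omega>\<in>E \<inter> space M. \<bar>Z n \<omega>\<bar> \<le> (p * \<bar>K1\<bar> + q * \<bar>K2\<bar> + s) * r n)"
      using EI m by blast
  qed
qed

theorem theorem3:
  fixes M :: "'a measure"
    and nF nM :: nat and C :: real
    and A :: "nat \<Rightarrow> nat \<Rightarrow> real" and \<beta> :: "nat \<Rightarrow> real"
    and Ahat :: "nat \<Rightarrow> 'a \<Rightarrow> nat \<Rightarrow> nat \<Rightarrow> real"
    and bhat :: "nat \<Rightarrow> 'a \<Rightarrow> nat \<Rightarrow> real"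
    and \<kappa> :: "nat \<Rightarrow> real"
  assumes "prob_space M"
    and "nF \<ge> 1" and "nM \<ge> 1"
    and "\<forall>i<nF. \<forall>j<nM. 0 \<le> A i j \<and> A i j \<le> 1"
    and "\<forall>i<nF. 0 \<le> \<beta> i \<and> \<beta> i \<le> 1"
    and "C > 0"
    and "feas nF nM C A \<beta> \<noteq> {}"
    and "bigOp M (\<lambda>n \<omega>. matnorm nF nM (\<lambda>i j. Ahat n \<omega> i j - A i j)) (\<lambda>n. 1 / sqrt (real n))"
    and "bigOp M (\<lambda>n \<omega>. supnorm nF (\<lambda>i. bhat n \<omega> i - \<beta> i)) (\<lambda>n. 1 / sqrt (real n))"
    and "full_col_rank nF nM A"
    and "\<forall>n. \<kappa> n > 0"
    and "\<exists>B. \<forall>n. \<kappa> n \<le> B"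
  shows "bigOp M (\<lambda>n \<omega>. thetahat_min nF nM C (Ahat n \<omega>) (bhat n \<omega>) (\<kappa> n / sqrt (real n))
                         - theta_min nF nM C A \<beta>) (\<lambda>n. 1 / sqrt (real n))
       \<and> bigOp M (\<lambda>n \<omega>. thetahat_max nF nM C (Ahat n \<omega>) (bhat n \<omega>) (\<kappa> n / sqrt (real n))
                         - theta_max nF nM C A \<beta>) (\<lambda>n. 1 / sqrt (real n))"
proof -
  note M = assms(1) and nF = assms(2) and nM = assms(3) and Aent = assms(4) and C = assms(6)
  obtain L where L: "L \<ge> 0" and Lp: "\<forall>w c. c \<ge> 0 \<longrightarrow> (\<forall>i<nF. \<bar>mulv nM A w i\<bar> \<le> c) \<longrightarrow> (\<forall>j<nM. \<bar>w j\<bar> \<le> L * c)"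
    using inv_bound[OF assms(10)] by blast
  obtain w0 where w0: "w0 \<in> feas nF nM C A \<beta>" using assms(7) by blast
  obtain B where B: "\<forall>n. \<kappa> n \<le> B" using assms(12) by blast
  define G where "G = real nF * real nM * real nM"
  have G0: "G \<ge> 0" unfolding G_def by simp
  define p where "p = G * ((C + 1) + L * (2 * real nM * C))"
  define q where "q = G * (L * 2)"
  define s where "s = G * L * \<bar>B\<bar>"
  have p0: "p \<ge> 0" unfolding p_def using G0 L C by simp
  have q0: "q \<ge> 0" unfolding q_def using G0 L by simp
  have s0: "s \<ge> 0" unfolding s_def using G0 L by simp
  have r0: "\<forall>n. 1 / sqrt (real n) \<ge> (0::real)" by simp
  let ?X = "\<lambda>n \<omega>. matnorm nF nM (\<lambda>i j. Ahat n \<omega> i j - A i j)"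
  let ?Y = "\<lambda>n \<omega>. supnorm nF (\<lambda>i. bhat n \<omega> i - \<beta> i)"
  have key: "\<bar>thetahat_min nF nM C (Ahat n \<omega>) (bhat n \<omega>) (\<kappa> n / sqrt (real n)) - theta_min nF nM C A \<beta>\<bar>
        \<le> p * \<bar>?X n \<omega>\<bar> + q * \<bar>?Y n \<omega>\<bar> + s * (1 / sqrt (real n))
      \<and> \<bar>thetahat_max nF nM C (Ahat n \<omega>) (bhat n \<omega>) (\<kappa> n / sqrt (real n)) - theta_max nF nM C A \<beta>\<bar>
        \<le> p * \<bar>?X n \<omega>\<bar> + q * \<bar>?Y n \<omega>\<bar> + s * (1 / sqrt (real n))"
    if n: "n \<ge> 1" for n \<omega>
  proof -
    let ?a = "?X n \<omega>" and ?b = "?Y n \<omega>" and ?t = "\<kappa> n / sqrt (real n)"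
    have a: "\<forall>i<nF. \<forall>j<nM. \<bar>Ahat n \<omega> i j - A i j\<bar> \<le> ?a"
      by (auto intro: matnorm_ge[where B="\<lambda>i j. Ahat n \<omega> i j - A i j", simplified])
    have b: "\<forall>i<nF. \<bar>bhat n \<omega> i - \<beta> i\<bar> \<le> ?b"
      by (auto intro: supnorm_ge[where v="\<lambda>i. bhat n \<omega> i - \<beta> i", simplified])
    have sq: "sqrt (real n) > 0" using n by simp
    have t: "?t > 0" using assms(11) sq by simp
    have tB: "?t \<le> \<bar>B\<bar> * (1 / sqrt (real n))"
      using B sq by (simp add: divide_right_mono order_trans[OF _ abs_ge_self])
    have df: "\<bar>thetahat_min nF nM C (Ahat n \<omega>) (bhat n \<omega>) ?t - theta_min nF nM C A \<beta>\<bar>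
        \<le> G * ((C + 1) * ?a + L * (2 * real nM * C * ?a + 2 * ?b + ?t))
      \<and> \<bar>thetahat_max nF nM C (Ahat n \<omega>) (bhat n \<omega>) ?t - theta_max nF nM C A \<beta>\<bar>
        \<le> G * ((C + 1) * ?a + L * (2 * real nM * C * ?a + 2 * ?b + ?t))"
      unfolding G_def by (rule det_final[OF nF nM Aent C w0 L Lp a b t])
    have "G * ((C + 1) * ?a + L * (2 * real nM * C * ?a + 2 * ?b + ?t)) = p * ?a + q * ?b + (G * L) * ?t"
      unfolding p_def q_def by (simp add: algebra_simps)
    also have "\<dots> \<le> p * \<bar>?a\<bar> + q * \<bar>?b\<bar> + (G * L) * (\<bar>B\<bar> * (1 / sqrt (real n)))"
      using p0 q0 G0 L tB by (intro add_mono mult_left_mono) auto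
    also have "\<dots> = p * \<bar>?a\<bar> + q * \<bar>?b\<bar> + s * (1 / sqrt (real n))"
      unfolding s_def by (simp add: algebra_simps)
    finally show ?thesis using df by linarith
  qed
  show ?thesis
  proof
    show "bigOp M (\<lambda>n \<omega>. thetahat_min nF nM C (Ahat n \<omega>) (bhat n \<omega>) (\<kappa> n / sqrt (real n))
                         - theta_min nF nM C A \<beta>) (\<lambda>n. 1 / sqrt (real n))"
      by (rule bigOp_comb[OF M assms(8) assms(9) r0 p0 q0 s0]) (use key in auto)
    show "bigOp M (\<lambda>n \<omega>. thetahat_max nF nM C (Ahat n \<omega>) (bhat n \<omega>) (\<kappa> n / sqrt (real n))
                         - theta_max nF nM C A \<beta>) (\<lambda>n. 1 / sqrt (real n))"
      by (rule bigOp_comb[OF M assms(8) assms(9) r0 p0 q0 s0]) (use key in auto)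
  qed
qed

end
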